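(* For $n\ge1$ and $0\le k<n$, \[ a_{n,k}=na_{n-1,k-1}+\frac{n(n-1)}{n-k}a_{n-1,k}, \] and for $n\ge2$ and $0\le k<n$, \[ b_{n,k}=nb_{n-1,k-1}+\frac{n(n-1)}{n-k}b_{n-1,k}. \] For $n\ge1$ and $0\le k\le n$, $a_{n,k}=b_{n,k}+(n-k+1)a_{n,k-1}$. For $n\ge1$, \[ b_{n,n}=na_{n-1,n-1}+\sum_{k=1}^{n-1}\binom{n-1}{k}\,k\,b_{k,k}\,a_{n-k-1,n-k-1}. \]
   Context: Let $A$ be the ring of formal series $\sum_{n\ge0}q_n(y)x^{-n}$, each $q_n$ a complex polynomial of degree at most $n$, with termwise formal derivatives $a_x=-\sum_{n\ge1}nq_n(y)x^{-n-1}$, $a_y=\sum_{n\ge1}q_n'(y)x^{-n}$, and formal logarithm $\log(1+u)=\sum_{k\ge1}(-1)^{k+1}u^k/k$. Let $V\in A$ be the unique solution of $V=1+\frac{y}{x}-\frac{1}{x}V-V_x-\frac{1}{x}V_y+\frac{1}{x}\log V$, and define $P_{n-1},Q_n$ by $V=1+\sum_{n\ge1}P_{n-1}(y)x^{-n}$, $\log V=\sum_{n\ge1}Q_n(y)x^{-n}$. For $n\ge1$ define coefficients $a_{n,k},b_{n,k}$ ($0\le k\le n$) by $P_n(y)=\frac{(-1)^{n+1}}{n!}\sum_{k=0}^n(-1)^ka_{n,k}y^{n-k}$ and $Q_n(y)=\frac{(-1)^{n+1}}{n!}\sum_{k=0}^n(-1)^kb_{n,k}y^{n-k}$. Conventions: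 for $n\ge1$, $a_{n,k}=b_{n,k}=0$ when $k<0$ or $k>n$; and $a_{0,0}=1$, $a_{0,-1}=1$, $a_{0,k}=0$ for other $k$ (so that $P_0(y)=y-1=-\sum_{k=-1}^0(-1)^ka_{0,k}y^{-k}$). *)

theory Defs
  imports "HOL-Computational_Algebra.Polynomial"
begin

text \<open>An element of the ring A, i.e. the formal series sum over n of q_n(y) x^(-n),
  is represented by its coefficient sequence q :: nat => complex poly.\<close>
type_synonym fser = "nat \<Rightarrow> complex poly"

definition inA :: "fser \<Rightarrow> bool" where
  "inA q \<longleftrightarrow> (\<forall>n. degree (q n) \<le> n)"

definition fs_one :: fser where
  "fs_one = (\<lambda>n. if n = 0 then 1 else 0)"

definition fs_mult :: "fser \<Rightarrow> fser \<Rightarrow> fser" where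
  "fs_mult f g = (\<lambda>n. \<Sum>i\<le>n. f i * g (n - i))"

primrec fs_pow :: "fser \<Rightarrow> nat \<Rightarrow> fser" where
  "fs_pow f 0 = fs_one"
| "fs_pow f (Suc k) = fs_mult f (fs_pow f k)"

text \<open>Multiplication by 1/x.\<close>
definition fs_shift :: "fser \<Rightarrow> fser" where
  "fs_shift f = (\<lambda>n. if n = 0 then 0 else f (n - 1))"

text \<open>Termwise derivative in x: a_x = - sum_{n>=1} n q_n x^(-n-1).\<close>
definition fs_dx :: "fser \<Rightarrow> fser" where
  "fs_dx f = (\<lambda>n. if n = 0 then 0 else - (of_nat (n - 1)) * f (n - 1))"

definition fs_dy :: "fser \<Rightarrow> fser" where
  "fs_dy f = (\<lambda>n. pderiv (f n))"

text \<open>Formal logarithm log(1+u) = sum_{k>=1} (-1)^(k+1) u^k / k, applied with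
  u = V - 1.  When the constant term of V is 1 (which is forced for the solution V),
  u^k only contributes to coefficients of index >= k, so the n-th coefficient
  is the finite sum over k = 1..n.\<close>
definition fs_log :: "fser \<Rightarrow> fser" where
  "fs_log V = (\<lambda>n. \<Sum>k\<in>{1..n}.
      smult ((-1) ^ (k + 1) / of_nat k) (fs_pow (\<lambda>m. V m - fs_one m) k n))"

definition fs_y_over_x :: fser where
  "fs_y_over_x = (\<lambda>n. if n = 1 then [:0, 1:] else 0)"

text \<open>Right-hand side of V = 1 + y/x - V/x - V_x - V_y/x + (log V)/x.\<close>
definition rhsV :: "fser \<Rightarrow> fser" where
  "rhsV V = (\<lambda>n. fs_one n + fs_y_over_x n - fs_shift V n - fs_dx V n
                 - fs_shift (fs_dy V) n + fs_shift (fs_log V) n)"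

definition Vsol :: fser where
  "Vsol = (THE V. inA V \<and> V = rhsV V)"

text \<open>V = 1 + sum_{n>=1} P_{n-1} x^(-n), log V = sum_{n>=1} Q_n x^(-n).\<close>
definition Pp :: "nat \<Rightarrow> complex poly" where
  "Pp m = Vsol (m + 1)"

definition Qq :: "nat \<Rightarrow> complex poly" where
  "Qq n = fs_log Vsol n"

text \<open>a_{n,k}: for n >= 1 read off from
  P_n(y) = (-1)^(n+1)/n! * sum_{k=0..n} (-1)^k a_{n,k} y^(n-k), zero outside 0..n;
  a_{0,0} = a_{0,-1} = 1, a_{0,k} = 0 otherwise.\<close>
definition acoef :: "nat \<Rightarrow> int \<Rightarrow> complex" where
  "acoef n k =
     (if n = 0 then (if k = 0 \<or> k = -1 then 1 else 0)
      else if 0 \<le> k \<and> k \<le> int n then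
        (-1) ^ (n + 1) * (-1) ^ nat k * fact n * coeff (Pp n) (n - nat k)
      else 0)"

text \<open>b_{n,k} for n >= 1 (value at n = 0 is never used).\<close>
definition bcoef :: "nat \<Rightarrow> int \<Rightarrow> complex" where
  "bcoef n k =
     (if n \<ge> 1 \<and> 0 \<le> k \<and> k \<le> int n then
        (-1) ^ (n + 1) * (-1) ^ nat k * fact n * coeff (Qq n) (n - nat k)
      else 0)"

end

theory Submission
  imports Defs "HOL-Computational_Algebra.Formal_Power_Series"
begin
unbundle fps_syntax

lemma fs_mult_loc:
  assumes "\<forall>m\<le>n. f m = f' m" "\<forall>m\<le>n. g m = g' m"
  shows "fs_mult f g n = fs_mult f' g' n"
  unfolding fs_mult_def using assms by (intro sum.cong) auto

lemma fs_pow_loc: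
  assumes "\<forall>m\<le>n. f m = f' m"
  shows "fs_pow f k n = fs_pow f' k n"
  using assms
proof (induction k arbitrary: n)
  case 0 then show ?case by simp
next
  case (Suc k)
  have "\<forall>m\<le>n. fs_pow f k m = fs_pow f' k m" using Suc by auto
  then show ?case using Suc.prems by (simp add: fs_mult_loc)
qed

lemma fs_log_loc:
  assumes "\<forall>m\<le>n. V m = V' m"
  shows "fs_log V n = fs_log V' n"
proof -
  have "\<forall>m\<le>n. V m - fs_one m = V' m - fs_one m" using assms by auto
  then show ?thesis unfolding fs_log_def
    by (intro sum.cong refl arg_cong[where f="smult _"] fs_pow_loc) auto
qed

lemma rhsV_loc:
  assumes "\<forall>m<n. V m = V' m"
  shows "rhsV V n = rhsV V' n"
proof (cases n)
  case 0 then show ?thesis by (simp add: rhsV_def fs_shift_def fs_dx_def)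
next
  case (Suc k)
  have "fs_log V k = fs_log V' k" using assms Suc by (intro fs_log_loc) auto
  moreover have "V k = V' k" using assms Suc by auto
  ultimately show ?thesis using Suc by (simp add: rhsV_def fs_shift_def fs_dx_def fs_dy_def)
qed

definition itV :: "nat \<Rightarrow> fser" where "itV k = (rhsV ^^ k) (\<lambda>_. 0)"

lemma itV_Suc: "itV (Suc k) = rhsV (itV k)" by (simp add: itV_def)

lemma itV_stable1: "\<forall>m<k. itV k m = itV (Suc k) m"
proof (induction k)
  case 0 then show ?case by simp
next
  case (Suc k)
  show ?case
  proof (intro allI impI)
    fix m assume "m < Suc k"
    then have "\<forall>j<m. itV k j = itV (Suc k) j" using Suc by auto
    then show "itV (Suc k) m = itV (Suc (Suc k)) m"
      by (simp only: itV_Suc[of k] itV_Suc[of "Suc k"] rhsV_loc)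
  qed
qed

lemma itV_stable: assumes "m < k" "k \<le> k'" shows "itV k m = itV k' m"
  using assms(2)
proof (induction k' rule: dec_induct)
  case base then show ?case by simp
next
  case (step k')
  then show ?case using itV_stable1[of k'] assms(1) by auto
qed

definition Vc :: fser where "Vc m = itV (Suc m) m"

lemma Vc_agree: "m < k \<Longrightarrow> Vc m = itV k m"
  unfolding Vc_def
  by (cases "Suc m \<le> k") (auto intro: itV_stable)

lemma Vc_sol: "Vc = rhsV Vc"
proof
  fix n
  have "rhsV Vc n = rhsV (itV n) n" by (intro rhsV_loc) (auto simp: Vc_agree)
  also have "\<dots> = itV (Suc n) n" by (simp add: itV_Suc)
  also have "\<dots> = Vc n" by (simp add: Vc_def)
  finally show "Vc n = rhsV Vc n" by simp
qed

lemma sol_unique: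
  assumes "F = rhsV F" "G = rhsV G" shows "F = G"
proof -
  have "\<forall>m<n. F m = G m" for n
  proof (induction n)
    case 0 then show ?case by simp
  next
    case (Suc n)
    have "F n = G n"
      using rhsV_loc[OF Suc] assms by metis
    with Suc show ?case by (auto simp: less_Suc_eq)
  qed
  then show ?thesis by auto
qed

lemma inA_mult: "inA f \<Longrightarrow> inA g \<Longrightarrow> inA (fs_mult f g)"
  unfolding inA_def fs_mult_def
proof (intro allI)
  fix n assume f: "\<forall>n. degree (f n) \<le> n" and g: "\<forall>n. degree (g n) \<le> n"
  show "degree (\<Sum>i\<le>n. f i * g (n - i)) \<le> n"
  proof (rule degree_sum_le)
    fix i assume "i \<in> {..n}"
    then have "degree (f i) \<le> i" "degree (g (n-i)) \<le> n - i" "i \<le> n" using f g by auto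
    then show "degree (f i * g (n - i)) \<le> n"
      using degree_mult_le[of "f i" "g (n - i)"] by linarith
  qed auto
qed

lemma inA_one: "inA fs_one" unfolding inA_def fs_one_def by auto

lemma inA_pow: "inA f \<Longrightarrow> inA (fs_pow f k)"
  by (induction k) (auto simp: inA_one inA_mult)

lemma inA_log: "inA V \<Longrightarrow> inA (fs_log V)"
proof -
  assume V: "inA V"
  have U: "inA (\<lambda>m. V m - fs_one m)" using V inA_one unfolding inA_def
    by (auto intro: degree_diff_le)
  show ?thesis unfolding inA_def fs_log_def
  proof (intro allI degree_sum_le)
    fix n k
    show "degree (smult ((- 1) ^ (k + 1) / of_nat k) (fs_pow (\<lambda>m. V m - fs_one m) k n)) \<le> n"
      using inA_pow[OF U, of k] unfolding inA_def
      by (meson degree_smult_le order_trans)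
  qed auto
qed

lemma inA_rhsV: "inA V \<Longrightarrow> inA (rhsV V)"
proof -
  assume V: "inA V"
  have L: "inA (fs_log V)" using inA_log[OF V] .
  show ?thesis unfolding inA_def
  proof
    fix n
    show "degree (rhsV V n) \<le> n"
    proof (cases n)
      case 0 then show ?thesis by (simp add: rhsV_def fs_one_def fs_shift_def fs_dx_def fs_y_over_x_def)
    next
      case (Suc k)
      have d1: "degree (V k) \<le> n" using V Suc unfolding inA_def by (metis le_SucI)
      have d2: "degree (fs_log V k) \<le> n" using L Suc unfolding inA_def by (metis le_SucI)
      have d3: "degree (pderiv (V k)) \<le> n" using d1 degree_pderiv[of "V k"] by linarith
      have d4: "degree (of_nat k * V k) \<le> n" using d1
        by (metis degree_mult_le degree_of_nat add_0 order_trans)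
      have d5: "degree (fs_y_over_x n) \<le> n" using Suc by (simp add: fs_y_over_x_def)
      have d6: "degree (fs_one n) \<le> n" by (simp add: fs_one_def)
      have eq: "rhsV V n = fs_one n + fs_y_over_x n - V k - (- (of_nat k * V k)) - pderiv (V k) + fs_log V k"
        using Suc by (simp add: rhsV_def fs_shift_def fs_dx_def fs_dy_def)
      show ?thesis unfolding eq
        using d1 d2 d3 d4 d5 d6
        by (intro degree_add_le degree_diff_le) (auto simp: degree_minus)
    qed
  qed
qed

lemma inA_itV: "inA (itV k)"
  by (induction k) (auto simp: itV_Suc inA_rhsV, simp add: itV_def inA_def)

lemma inA_Vc: "inA Vc"
  unfolding inA_def Vc_def using inA_itV unfolding inA_def by auto

lemma Vsol_eq: "Vsol = Vc"
  unfolding Vsol_def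
  by (rule the_equality) (auto simp: inA_Vc Vc_sol[symmetric] intro: sol_unique[OF _ Vc_sol])

lemma Vsol_rhs: "Vsol = rhsV Vsol" using Vsol_eq Vc_sol by simp



lemma fs_mult_fps: "fs_mult f g = fps_nth (Abs_fps f * Abs_fps g)"
  by (auto simp: fs_mult_def fps_mult_nth atLeast0AtMost)

lemma fs_one_fps: "fs_one = fps_nth 1"
  by (auto simp: fs_one_def)

lemma Abs_fps_nth: "Abs_fps (fps_nth F) = F"
  by (rule fps_ext) simp

lemma fs_pow_fps: "fs_pow f k = fps_nth (Abs_fps f ^ k)"
  by (induction k) (simp_all add: fs_one_fps fs_mult_fps Abs_fps_nth)

lemma pow_low: "U $ 0 = 0 \<Longrightarrow> j < k \<Longrightarrow> (U ^ k) $ j = 0"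
  using startsby_zero_power_prefix by blast

lemma log_deriv:
  fixes Dl :: "complex poly fps \<Rightarrow> complex poly fps" and d :: "nat \<Rightarrow> complex poly \<Rightarrow> complex poly"
  assumes loc: "\<And>f n. Dl f $ n = d n (f $ n)"
    and leib: "\<And>f g. Dl (f * g) = Dl f * g + f * Dl g"
    and addD: "\<And>f g. Dl (f + g) = Dl f + Dl g"
    and constD: "\<And>c. Dl (fps_const [:c:]) = 0"
    and U0: "U $ 0 = 0"
  shows "(1 + U) * Dl (Abs_fps (\<lambda>n. \<Sum>k\<in>{1..n}. smult ((-1)^(k+1) / of_nat k) ((U^k) $ n))) = Dl U"
proof -
  define c where "c k = fps_const [:((-1::complex)^(k+1) / of_nat k):]" for k :: nat
  define G where "G N = (\<Sum>k\<in>{1..N}. c k * U^k)" for N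
  have Dl0: "Dl 0 = 0" using leib[of 0 0] by simp
  have cmul: "Dl (c k * f) = c k * Dl f" for k f
    using leib[of "c k" f] constD by (simp add: c_def)
  have Dpow: "Dl (U ^ Suc m) = of_nat (Suc m) * U ^ m * Dl U" for m
  proof (induction m)
    case 0 then show ?case using leib[of U 1] by simp
  next
    case (Suc m)
    have "Dl (U ^ Suc (Suc m)) = Dl (U * U ^ Suc m)" by simp
    also have "\<dots> = Dl U * U ^ Suc m + U * (of_nat (Suc m) * U ^ m * Dl U)"
      using leib Suc by simp
    also have "\<dots> = of_nat (Suc (Suc m)) * U ^ Suc m * Dl U"
      by (simp add: algebra_simps)
    finally show ?case .
  qed
  have ck: "c (Suc m) * of_nat (Suc m) = (-1) ^ m" for m
  proof -
    have "c (Suc m) * of_nat (Suc m) = fps_const ([:((-1::complex)^(Suc m+1) / of_nat (Suc m)):] * [:of_nat (Suc m):])"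
    proof -
      have e: "(of_nat (Suc m) :: complex poly fps) = fps_const [:of_nat (Suc m):]"
        by (metis fps_of_nat of_nat_poly)
      show ?thesis by (simp only: c_def e fps_const_mult)
    qed
    also have "[:((-1::complex)^(Suc m+1) / of_nat (Suc m)):] * [:of_nat (Suc m):] = [:(-1)^m:]"
    proof -
      have nz: "(1::complex) + of_nat m \<noteq> 0" by (metis of_nat_Suc of_nat_eq_0_iff nat.distinct(1))
      show ?thesis using nz by simp
    qed
    also have "fps_const [:(-1::complex)^m:] = (-1) ^ m"
    proof (induction m)
      case 0 then show ?case by simp
    next
      case (Suc m)
      have "[:(-1::complex)^Suc m:] = - [:(-1)^m:]" by simp
      then have "fps_const [:(-1::complex)^Suc m:] = - fps_const [:(-1)^m:]" by simp
      then show ?case using Suc by simp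
    qed
    finally show ?thesis .
  qed
  have DG: "Dl (G N) = (\<Sum>k\<in>{1..N}. (-U)^(k-1)) * Dl U" for N
  proof (induction N)
    case 0 then show ?case by (simp add: G_def Dl0)
  next
    case (Suc N)
    have "G (Suc N) = G N + c (Suc N) * U ^ Suc N" by (simp add: G_def)
    then have "Dl (G (Suc N)) = Dl (G N) + c (Suc N) * (of_nat (Suc N) * U ^ N * Dl U)"
      by (simp only: addD cmul Dpow)
    also have "c (Suc N) * (of_nat (Suc N) * U ^ N * Dl U) = (-U)^N * Dl U"
    proof -
      have "c (Suc N) * (of_nat (Suc N) * U ^ N * Dl U) = (c (Suc N) * of_nat (Suc N)) * U^N * Dl U"
        by (simp only: mult.assoc)
      also have "\<dots> = (-U)^N * Dl U" by (simp only: ck power_minus[of U N])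
      finally show ?thesis .
    qed
    finally have "Dl (G (Suc N)) = (\<Sum>k\<in>{1..N}. (-U)^(k-1)) * Dl U + (-U)^(Suc N - 1) * Dl U"
      using Suc by simp
    then show ?case by (simp add: sum.cl_ivl_Suc distrib_right)
  qed
  have geo: "(1 + U) * (\<Sum>k\<in>{1..N}. (-U)^(k-1)) = 1 - (-U)^N" for N
  proof (induction N)
    case 0 then show ?case by simp
  next
    case (Suc N)
    have "(1 + U) * (\<Sum>k\<in>{1..Suc N}. (-U)^(k-1)) = (1 + U) * (\<Sum>k\<in>{1..N}. (-U)^(k-1)) + (1 + U) * (-U)^N"
      by (simp add: sum.cl_ivl_Suc distrib_left)
    also have "\<dots> = 1 - (-U)^N + (-U)^N + U * (-U)^N" using Suc by (simp add: distrib_right)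
    also have "\<dots> = 1 - (-U)^Suc N" by simp
    finally show ?case .
  qed
  define L where "L = Abs_fps (\<lambda>n. \<Sum>k\<in>{1..n}. smult ((-1)^(k+1) / of_nat k) ((U^k) $ n))"
  show ?thesis unfolding L_def[symmetric]
  proof (rule fps_ext)
    fix n
    define N where "N = Suc n"
    have LG: "L $ j = G N $ j" if "j \<le> n" for j
    proof -
      have "G N $ j = (\<Sum>k\<in>{1..N}. smult ((-1)^(k+1) / of_nat k) ((U^k) $ j))"
        by (simp add: G_def c_def fps_sum_nth)
      also have "\<dots> = (\<Sum>k\<in>{1..j}. smult ((-1)^(k+1) / of_nat k) ((U^k) $ j))"
        using that pow_low[OF U0] by (intro sum.mono_neutral_right) (auto simp: N_def)
      finally show ?thesis by (simp add: L_def)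
    qed
    have "((1 + U) * Dl L) $ n = ((1 + U) * Dl (G N)) $ n"
      unfolding fps_mult_nth using LG by (intro sum.cong refl) (simp add: loc)
    also have "\<dots> = ((1 - (-U)^N) * Dl U) $ n"
      by (simp only: DG mult.assoc[symmetric] geo)
    also have "\<dots> = Dl U $ n - ((-U)^N * Dl U) $ n"
      by (simp only: left_diff_distrib fps_sub_nth mult_1_left)
    also have "((-U)^N * Dl U) $ n = 0"
    proof -
      have "(-U) $ 0 = 0" using U0 by simp
      then have "\<forall>i\<le>n. ((-U)^N) $ i = 0" using pow_low[of "-U" _ N] by (auto simp: N_def simp del: power_Suc)
      then show ?thesis unfolding fps_mult_nth by (intro sum.neutral) auto
    qed
    finally show "((1 + U) * Dl L) $ n = Dl U $ n" by simp
  qed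
qed



lemma alg_id:
  fixes a X Y p d q r s L tL dL :: "'a::comm_ring_1"
  shows "a*(X*a - X*p + X*d - d) - X*(a*(X*a + X*p - (X*p + X*q) + (X*d + X*r) - r) - a*(X*a - X*p + X*d - d) - a*(X*d - X*r + X*s - s) + (X*a - X*p + X*d - d))
    = X*(a*(X*Y - X*a + X*q - X*d - X*r + X*L + X*tL - p) - a*(1 + X*Y - X*a + X*p - X*d + X*L - a) - X*(a*tL - p))
      - (X - 1)*(a*(X - X*d + X*r - X*s + X*dL - d) - X*(a*dL - d))"
  by (simp add: algebra_simps)


definition th :: "complex poly fps \<Rightarrow> complex poly fps" where
  "th f = Abs_fps (\<lambda>n. of_nat n * f $ n)"
definition Dy :: "complex poly fps \<Rightarrow> complex poly fps" where
  "Dy f = Abs_fps (\<lambda>n. pderiv (f $ n))"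

lemma th_nth [simp]: "th f $ n = of_nat n * f $ n" by (simp add: th_def)
lemma Dy_nth [simp]: "Dy f $ n = pderiv (f $ n)" by (simp add: Dy_def)

lemma th_alt: "th f = fps_X * fps_deriv f"
  by (rule fps_ext) (auto simp: th_def)

lemma th_mult: "th (f * g) = th f * g + f * th g"
  unfolding th_alt by (simp add: algebra_simps)

lemma th_add: "th (f + g) = th f + th g"
  by (rule fps_ext) (simp add: algebra_simps)
lemma th_diff: "th (f - g) = th f - th g"
  by (rule fps_ext) (simp add: algebra_simps)
lemma th_const: "th (fps_const c) = 0"
  by (rule fps_ext) (simp add: fps_nth_fps_const)
lemma th_one: "th 1 = 0"
  using th_const[of 1] by simp
lemma th_X: "th fps_X = fps_X"
  by (rule fps_ext) (simp add: fps_X_nth)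
lemma th_Xmult: "th (fps_X * f) = fps_X * f + fps_X * th f"
  by (simp add: th_mult th_X)

lemma pderiv_sum': "pderiv (sum f A) = (\<Sum>x\<in>A. pderiv (f x))"
  using higher_pderiv_sum[of 1 f A] by simp

lemma Dy_mult: "Dy (f * g) = Dy f * g + f * Dy g"
proof (rule fps_ext)
  fix n
  show "Dy (f * g) $ n = (Dy f * g + f * Dy g) $ n"
    unfolding Dy_nth fps_add_nth fps_mult_nth pderiv_sum' sum.distrib[symmetric]
    by (intro sum.cong refl) (simp add: pderiv_mult algebra_simps)
qed

lemma Dy_add: "Dy (f + g) = Dy f + Dy g"
  by (rule fps_ext) (simp add: pderiv_add)
lemma Dy_diff: "Dy (f - g) = Dy f - Dy g"
  by (rule fps_ext) (simp add: pderiv_diff)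
lemma Dy_const: "Dy (fps_const c) = fps_const (pderiv c)"
  by (rule fps_ext) (simp add: fps_nth_fps_const)
lemma Dy_one: "Dy 1 = 0"
  using Dy_const[of 1] by (simp add: pderiv_pCons)
lemma Dy_X: "Dy fps_X = 0"
  by (rule fps_ext) (simp add: fps_X_nth)
lemma Dy_Xmult: "Dy (fps_X * f) = fps_X * Dy f"
  by (simp add: Dy_mult Dy_X)
lemma th_Dy: "th (Dy f) = Dy (th f)"
  by (rule fps_ext) (simp add: pderiv_mult)

definition VV :: "complex poly fps" where "VV = Abs_fps Vsol"
definition LL :: "complex poly fps" where "LL = Abs_fps (fs_log Vsol)"
definition YY :: "complex poly fps" where "YY = fps_const [:0, 1:]"

lemma Vsol0: "Vsol 0 = 1"
  using fun_cong[OF Vsol_rhs, of 0] by (simp add: rhsV_def fs_one_def fs_shift_def fs_dx_def fs_y_over_x_def)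

lemma Vsol_Suc: "Vsol (Suc m) = (if m = 0 then [:0,1:] else 0) - Vsol m + of_nat m * Vsol m - pderiv (Vsol m) + fs_log Vsol m"
  using fun_cong[OF Vsol_rhs, of "Suc m"]
  by (simp add: rhsV_def fs_one_def fs_shift_def fs_dx_def fs_y_over_x_def fs_dy_def)

lemma LL_form: "LL = Abs_fps (\<lambda>n. \<Sum>k\<in>{1..n}. smult ((-1)^(k+1) / of_nat k) (((VV - 1)^k) $ n))"
proof -
  have "Abs_fps (\<lambda>m. Vsol m - fs_one m) = VV - 1"
    by (rule fps_ext) (simp add: VV_def fs_one_def)
  then show ?thesis
    unfolding LL_def fs_log_def fs_pow_fps by simp
qed

lemma VV0: "VV $ 0 = 1" unfolding VV_def fps_nth_Abs_fps by (rule Vsol0)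
lemma U0: "(VV - 1) $ 0 = 0" by (simp add: VV0)

lemma log_th: "VV * th LL = th VV"
proof -
  have "(1 + (VV - 1)) * th LL = th (VV - 1)"
    unfolding LL_form
    by (rule log_deriv[where d="\<lambda>n p. of_nat n * p"]) (auto simp: th_mult th_add th_const U0 VV0)
  then show ?thesis by (simp add: th_diff th_one)
qed

lemma log_Dy: "VV * Dy LL = Dy VV"
proof -
  have "(1 + (VV - 1)) * Dy LL = Dy (VV - 1)"
    unfolding LL_form
    by (rule log_deriv[where d="\<lambda>n p. pderiv p"]) (auto simp: Dy_mult Dy_add Dy_const U0 VV0)
  then show ?thesis by (simp add: Dy_diff Dy_one)
qed

lemma eqV: "VV = 1 + fps_X * YY - fps_X * VV + fps_X * th VV - fps_X * Dy VV + fps_X * LL"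
proof (rule fps_ext)
  fix n
  show "VV $ n = (1 + fps_X * YY - fps_X * VV + fps_X * th VV - fps_X * Dy VV + fps_X * LL) $ n"
  proof (cases n)
    case 0 then show ?thesis by (simp add: VV0)
  next
    case (Suc m)
    then show ?thesis by (simp add: VV_def LL_def YY_def Vsol_Suc fps_nth_fps_const)
  qed
qed



lemma mult_nth_zero: "\<forall>j\<le>m. g $ j = 0 \<Longrightarrow> (f * g) $ m = (0::complex poly)"
  unfolding fps_mult_nth by (intro sum.neutral) auto

lemma zero_by_rec:
  fixes H a :: "complex poly fps"
  assumes a0: "a $ 0 = 1" and rec: "a * H = fps_X * (a * th H - a * H - a * Dy H + H)"
  shows "H = 0"
proof -
  have "H $ n = 0" for n
  proof (induction n rule: less_induct)
    case (less n)
    have lhs: "(a * H) $ n = H $ n"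
    proof (cases n)
      case 0 then show ?thesis using a0 by simp
    next
      case (Suc m)
      have "(a * H) $ n = (\<Sum>i=0..n. a$i * H$(n-i))" by (simp add: fps_mult_nth)
      also have "\<dots> = a$0 * H$(n-0) + (\<Sum>i=1..n. a$i * H$(n-i))"
        using Suc by (simp add: sum.atLeast_Suc_atMost)
      also have "(\<Sum>i=1..n. a$i * H$(n-i)) = 0"
        using less by (intro sum.neutral) auto
      finally show ?thesis using a0 by simp
    qed
    have rhs: "(fps_X * (a * th H - a * H - a * Dy H + H)) $ n = 0"
    proof (cases n)
      case 0 then show ?thesis by simp
    next
      case (Suc m)
      have z1: "\<forall>j\<le>m. H $ j = 0" using less Suc by auto
      then have z2: "\<forall>j\<le>m. th H $ j = 0" "\<forall>j\<le>m. Dy H $ j = 0" by auto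
      show ?thesis using Suc mult_nth_zero[OF z1] mult_nth_zero[OF z2(1)] mult_nth_zero[OF z2(2)] z1
        by simp
    qed
    show ?case using lhs rhs rec by simp
  qed
  then show ?thesis by (intro fps_ext) simp
qed

lemma th_YY: "th YY = 0" by (simp add: YY_def th_const)
lemma Dy_YY: "Dy YY = 1" by (simp add: YY_def Dy_const pderiv_pCons)

lemma H_zero: "fps_X * VV - fps_X * th VV + fps_X * Dy VV - Dy VV = 0"
proof -
  define X :: "complex poly fps" where "X = fps_X"
  define a p d q r s L tL dL where "a = VV" and "p = th VV" and "d = Dy VV" and "q = th (th VV)"
    and "r = th (Dy VV)" and "s = Dy (Dy VV)" and "L = LL" and "tL = th LL" and "dL = Dy LL"
  have e0: "a = 1 + X*YY - X*a + X*p - X*d + X*L"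
    using eqV unfolding X_def a_def p_def d_def L_def .
  have "th VV = th (1 + fps_X * YY - fps_X * VV + fps_X * th VV - fps_X * Dy VV + fps_X * LL)"
    using eqV by (rule arg_cong)
  then have e1: "p = X*YY - (X*a + X*p) + (X*p + X*q) - (X*d + X*r) + (X*L + X*tL)"
    unfolding X_def a_def p_def d_def q_def r_def L_def tL_def
    by (simp only: th_add th_diff th_Xmult th_one th_YY th_Dy mult_zero_right add_0_right add_0_left)
  have "Dy VV = Dy (1 + fps_X * YY - fps_X * VV + fps_X * th VV - fps_X * Dy VV + fps_X * LL)"
    using eqV by (rule arg_cong)
  then have e2: "d = X*1 - X*d + X*r - X*s + X*dL"
    unfolding X_def a_def p_def d_def r_def s_def L_def dL_def
    by (simp only: Dy_add Dy_diff Dy_Xmult Dy_one Dy_YY th_Dy add_0_left)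
  have l1: "a * tL = p" unfolding a_def tL_def p_def by (rule log_th)
  have l2: "a * dL = d" unfolding a_def dL_def d_def by (rule log_Dy)
  define H where "H = X*a - X*p + X*d - d"
  have thH: "th H = X*a + X*p - (X*p + X*q) + (X*d + X*r) - r"
    unfolding H_def X_def a_def p_def d_def q_def r_def
    by (simp only: th_add th_diff th_Xmult)
  have DyH: "Dy H = X*d - X*r + X*s - s"
    unfolding H_def X_def a_def p_def d_def r_def s_def
    by (simp only: Dy_add Dy_diff Dy_Xmult th_Dy)
  have z0: "1 + X*YY - X*a + X*p - X*d + X*L - a = 0" using e0 by simp
  have z1: "X*YY - X*a + X*q - X*d - X*r + X*L + X*tL - p = 0" using e1 by (simp add: algebra_simps)
  have z2: "X - X*d + X*r - X*s + X*dL - d = 0" using e2 by simp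
  have z3: "a*tL - p = 0" "a*dL - d = 0" using l1 l2 by simp_all
  have "a*H - X*(a*th H - a*H - a*Dy H + H) =
    X*(a*(X*YY - X*a + X*q - X*d - X*r + X*L + X*tL - p) - a*(1 + X*YY - X*a + X*p - X*d + X*L - a) - X*(a*tL - p))
      - (X - 1)*(a*(X - X*d + X*r - X*s + X*dL - d) - X*(a*dL - d))"
    unfolding thH DyH unfolding H_def by (rule alg_id)
  also have "\<dots> = 0" unfolding z0 z1 z2 z3 by simp
  finally have rec: "a * H = X * (a * th H - a * H - a * Dy H + H)" by simp
  have "H = 0" using zero_by_rec[OF _ rec[unfolded X_def]] VV0 unfolding a_def by simp
  then show ?thesis unfolding H_def X_def a_def p_def d_def .
qed

lemma Vsol_deriv: "pderiv (Vsol (Suc m)) = Vsol m - of_nat m * Vsol m + pderiv (Vsol m)"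
proof -
  have "(fps_X * VV - fps_X * th VV + fps_X * Dy VV - Dy VV) $ Suc m = 0"
    using H_zero by simp
  then show ?thesis by (simp add: VV_def algebra_simps)
qed



lemma nzc [simp]: "(1::complex) + of_nat i \<noteq> 0"
  by (metis of_nat_Suc of_nat_eq_0_iff nat.distinct(1))

lemma coeff_ofnat_mult [simp]: "coeff (of_nat c * p) i = (of_nat c :: complex) * coeff p i"
  by (simp add: of_nat_poly)

lemma fs_log_0: "fs_log V 0 = 0" by (simp add: fs_log_def)

lemma Pp0: "Pp 0 = [:-1, 1:]"
proof -
  have "[:0,1:] - (1::complex poly) = [:-1,1:]" by (simp add: one_pCons)
  then show ?thesis using Vsol_Suc[of 0] by (simp add: Pp_def Vsol0 fs_log_0)
qed

lemma P_deriv: "n \<ge> 1 \<Longrightarrow> pderiv (Pp n) = pderiv (Pp (n-1)) - of_nat (n-1) * Pp (n-1)"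
proof -
  assume "n \<ge> 1"
  then obtain m where n: "n = Suc m" by (cases n) auto
  have "pderiv (Pp n) = Vsol n - of_nat n * Vsol n + pderiv (Vsol n)"
    using Vsol_deriv[of n] by (simp add: Pp_def)
  also have "Vsol n = Pp m" by (simp add: Pp_def n)
  finally show ?thesis by (simp add: n algebra_simps)
qed

lemma Q_eq: "n \<ge> 1 \<Longrightarrow> Qq n = Pp n + pderiv (Pp n)"
proof -
  assume n: "n \<ge> 1"
  define E where "E = - Vsol n + of_nat n * Vsol n - pderiv (Vsol n)"
  have h: "Vsol (Suc n) = E + fs_log Vsol n"
    using Vsol_Suc[of n] n by (simp add: E_def)
  have d: "pderiv (Vsol (Suc n)) = - E" using Vsol_deriv[of n] by (simp add: E_def)
  show ?thesis unfolding Pp_def Qq_def Suc_eq_plus1[symmetric] d using h by simp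
qed

lemma P_deg: "n \<ge> 1 \<Longrightarrow> n < j \<Longrightarrow> coeff (Pp n) j = 0"
proof (induction n arbitrary: j rule: nat_induct_at_least)
  case base
  then obtain i where j: "j = Suc i" by (cases j) auto
  have "coeff (pderiv (Pp 1)) i = coeff (pderiv (Pp 0)) i" using P_deriv[of 1] by simp
  then have "of_nat j * coeff (Pp 1) j = of_nat j * coeff (Pp 0) j" by (simp add: coeff_pderiv j)
  moreover have "coeff (Pp 0) j = 0" using base by (simp add: Pp0 coeff_pCons split: nat.split)
  ultimately show ?case by (simp add: j)
next
  case (Suc n)
  then obtain i where j: "j = Suc i" by (cases j) auto
  have "coeff (pderiv (Pp (Suc n))) i = coeff (pderiv (Pp n)) i - of_nat n * coeff (Pp n) i"
    using P_deriv[of "Suc n"] by (simp add: coeff_diff)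
  then have "of_nat j * coeff (Pp (Suc n)) j = of_nat j * coeff (Pp n) j - of_nat n * coeff (Pp n) i"
    by (simp add: coeff_pderiv j)
  moreover have "coeff (Pp n) j = 0" "coeff (Pp n) i = 0" using Suc j by auto
  ultimately show ?case by (simp add: j)
qed

lemma Q_deg: "n \<ge> 1 \<Longrightarrow> n < j \<Longrightarrow> coeff (Qq n) j = 0"
  using P_deg[of n j] P_deg[of n "Suc j"] by (simp add: Q_eq coeff_pderiv)

lemma Q_deriv: "n \<ge> 2 \<Longrightarrow> pderiv (Qq n) = pderiv (Qq (n-1)) - of_nat (n-1) * Qq (n-1)"
proof -
  assume n: "n \<ge> 2"
  have pd: "pderiv (of_nat c * p) = of_nat c * pderiv p" for c p
    by (simp add: pderiv_mult)
  show ?thesis using n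
    by (simp add: Q_eq P_deriv pderiv_add pderiv_diff pd algebra_simps)
qed

lemma sign_lemma: "j \<le> n \<Longrightarrow> (-1::complex)^(n+1) * (-1)^(n-j) = (-1)^(j+1)"
proof -
  assume "j \<le> n"
  then have "(n+1) + (n-j) = (j+1) + 2*(n-j)" by simp
  then have "(-1::complex)^(n+1) * (-1)^(n-j) = (-1)^(j+1) * ((-1)^2)^(n-j)"
    by (metis power_add power_mult)
  then show ?thesis by simp
qed

lemma acoef_j: "j \<le> n + 1 \<Longrightarrow> acoef n (int n - int j) = (-1)^(j+1) * fact n * coeff (Pp n) j"
proof (cases "n = 0")
  case True
  assume "j \<le> n + 1"
  then have "j = 0 \<or> j = 1" using True by auto
  then show ?thesis using True by (auto simp: acoef_def Pp0)
next
  case False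
  assume j: "j \<le> n + 1"
  show ?thesis
  proof (cases "j = n + 1")
    case True
    then show ?thesis using False P_deg[of n j] by (simp add: acoef_def)
  next
    case False2: False
    then have jn: "j \<le> n" using j by simp
    have "nat (int n - int j) = n - j" by simp
    moreover have "n - (n - j) = j" using jn by simp
    ultimately show ?thesis using False jn sign_lemma[OF jn] by (simp add: acoef_def)
  qed
qed

lemma bcoef_j: "n \<ge> 1 \<Longrightarrow> j \<le> n + 1 \<Longrightarrow> bcoef n (int n - int j) = (-1)^(j+1) * fact n * coeff (Qq n) j"
proof -
  assume n: "n \<ge> 1" and j: "j \<le> n + 1"
  show ?thesis
  proof (cases "j = n + 1")
    case True
    then show ?thesis using n Q_deg[of n j] by (simp add: bcoef_def)
  next
    case False
    then have jn: "j \<le> n" using j by simp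
    have "nat (int n - int j) = n - j" by simp
    moreover have "n - (n - j) = j" using jn by simp
    ultimately show ?thesis using n jn sign_lemma[OF jn] by (simp add: bcoef_def)
  qed
qed

lemma rec_coef:
  fixes A B C :: complex
  assumes "of_nat (Suc i) * A = of_nat (Suc i) * B - of_nat m * C"
  shows "(-1)^(Suc i+1) * fact (Suc m) * A = of_nat (Suc m) * ((-1)^(Suc i+1) * fact m * B)
     + (of_nat (Suc m) * of_nat m / of_nat (Suc i)) * ((-1)^(i+1) * fact m * C)"
proof -
  have nz: "(of_nat (Suc i) :: complex) \<noteq> 0" by (metis of_nat_eq_0_iff nat.distinct(1))
  have A: "A = B - of_nat m * C / of_nat (Suc i)" using assms nz
    by (simp add: field_simps)
  show ?thesis unfolding A using nz by (simp add: field_simps)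
qed



lemma claim1:
  assumes "n \<ge> 1" "0 \<le> k" "k < int n"
  shows "acoef n k = of_nat n * acoef (n - 1) (k - 1)
              + (of_nat n * of_nat (n - 1) / of_int (int n - k)) * acoef (n - 1) k"
proof -
  obtain m where n: "n = Suc m" using assms by (cases n) auto
  define j where "j = n - nat k"
  have j1: "j \<ge> 1" "j \<le> n" using assms by (auto simp: j_def)
  then obtain i where ji: "j = Suc i" by (cases j) auto
  have k1: "k = int n - int j" and k2: "k - 1 = int m - int j" and k3: "k = int m - int i"
    and k4: "int n - k = int j"
  proof -
    have jk: "int j = int n - k" using assms by (simp add: j_def)
    show "k = int n - int j" "k - 1 = int m - int j" "k = int m - int i" "int n - k = int j"
      using jk ji n by simp_all
  qed
  have A: "acoef n k = (-1)^(j+1) * fact n * coeff (Pp n) j"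
    unfolding k1 using j1 by (intro acoef_j) simp
  have B: "acoef (n-1) (k-1) = (-1)^(j+1) * fact m * coeff (Pp m) j"
    unfolding k2 using j1 acoef_j[of j m] by (simp add: n)
  have C: "acoef (n-1) k = (-1)^(i+1) * fact m * coeff (Pp m) i"
    unfolding k3 using j1 acoef_j[of i m] by (simp add: n ji)
  have "coeff (pderiv (Pp n)) i = coeff (pderiv (Pp m)) i - of_nat m * coeff (Pp m) i"
    using P_deriv[of n] by (simp add: n coeff_diff)
  then have D: "of_nat (Suc i) * coeff (Pp n) j = of_nat (Suc i) * coeff (Pp m) j - of_nat m * coeff (Pp m) i"
    by (simp add: coeff_pderiv ji)
  show ?thesis
    unfolding A B C k4 of_int_of_nat_eq using rec_coef[OF D] by (simp add: n ji)
qed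

lemma claim2:
  assumes "n \<ge> 2" "0 \<le> k" "k < int n"
  shows "bcoef n k = of_nat n * bcoef (n - 1) (k - 1)
              + (of_nat n * of_nat (n - 1) / of_int (int n - k)) * bcoef (n - 1) k"
proof -
  obtain m where n: "n = Suc m" using assms by (cases n) auto
  have m1: "m \<ge> 1" using assms n by simp
  define j where "j = n - nat k"
  have j1: "j \<ge> 1" "j \<le> n" using assms by (auto simp: j_def)
  then obtain i where ji: "j = Suc i" by (cases j) auto
  have k1: "k = int n - int j" and k2: "k - 1 = int m - int j" and k3: "k = int m - int i"
    and k4: "int n - k = int j"
  proof -
    have jk: "int j = int n - k" using assms by (simp add: j_def)
    show "k = int n - int j" "k - 1 = int m - int j" "k = int m - int i" "int n - k = int j"
      using jk ji n by simp_all
  qed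
  have A: "bcoef n k = (-1)^(j+1) * fact n * coeff (Qq n) j"
    unfolding k1 using j1 assms by (intro bcoef_j) simp_all
  have B: "bcoef (n-1) (k-1) = (-1)^(j+1) * fact m * coeff (Qq m) j"
    unfolding k2 using j1 bcoef_j[of m j] m1 by (simp add: n)
  have C: "bcoef (n-1) k = (-1)^(i+1) * fact m * coeff (Qq m) i"
    unfolding k3 using j1 bcoef_j[of m i] m1 by (simp add: n ji)
  have "coeff (pderiv (Qq n)) i = coeff (pderiv (Qq m)) i - of_nat m * coeff (Qq m) i"
    using Q_deriv[of n] assms by (simp add: n coeff_diff)
  then have D: "of_nat (Suc i) * coeff (Qq n) j = of_nat (Suc i) * coeff (Qq m) j - of_nat m * coeff (Qq m) i"
    by (simp add: coeff_pderiv ji)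
  show ?thesis
    unfolding A B C k4 of_int_of_nat_eq using rec_coef[OF D] by (simp add: n ji)
qed

lemma claim3:
  assumes "n \<ge> 1" "0 \<le> k" "k \<le> int n"
  shows "acoef n k = bcoef n k + of_int (int n - k + 1) * acoef n (k - 1)"
proof -
  define j where "j = n - nat k"
  have j1: "j \<le> n" using assms by (auto simp: j_def)
  have k1: "k = int n - int j" and k2: "k - 1 = int n - int (Suc j)" and k4: "int n - k + 1 = int (Suc j)"
    using assms j1 by (auto simp: j_def)
  have A: "acoef n k = (-1)^(j+1) * fact n * coeff (Pp n) j"
    unfolding k1 using j1 by (intro acoef_j) simp
  have B: "bcoef n k = (-1)^(j+1) * fact n * coeff (Qq n) j"
    unfolding k1 using j1 assms by (intro bcoef_j) simp_all
  have C: "acoef n (k-1) = (-1)^(Suc j+1) * fact n * coeff (Pp n) (Suc j)"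
    unfolding k2 using j1 by (intro acoef_j) simp
  have Q: "coeff (Qq n) j = coeff (Pp n) j + of_nat (Suc j) * coeff (Pp n) (Suc j)"
    using Q_eq[of n] assms by (simp add: coeff_pderiv)
  show ?thesis
    unfolding A B C k4 of_int_of_nat_eq Q by (simp add: algebra_simps)
qed

lemma coeff_of_nat_0 [simp]: "coeff (of_nat x :: complex poly) 0 = of_nat x"
  by (simp add: of_nat_poly)

lemma log_coeff0:
  "(\<Sum>i=1..m. of_nat i * coeff (fs_log Vsol i) 0 * coeff (Vsol (Suc m - i)) 0)
     + of_nat (Suc m) * coeff (fs_log Vsol (Suc m)) 0 = of_nat (Suc m) * coeff (Vsol (Suc m)) 0"
proof -
  define f where "f i = of_nat i * coeff (fs_log Vsol i) 0 * coeff (Vsol (Suc m - i)) 0" for i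
  have "(th LL * VV) $ Suc m = th VV $ Suc m" using log_th by (simp add: mult.commute)
  then have "(\<Sum>i=0..Suc m. (of_nat i * fs_log Vsol i) * Vsol (Suc m - i)) = of_nat (Suc m) * Vsol (Suc m)"
    by (simp add: fps_mult_nth LL_def VV_def)
  then have "coeff (\<Sum>i=0..Suc m. (of_nat i * fs_log Vsol i) * Vsol (Suc m - i)) 0 = coeff (of_nat (Suc m) * Vsol (Suc m)) 0"
    by simp
  then have S: "(\<Sum>i=0..Suc m. f i) = of_nat (Suc m) * coeff (Vsol (Suc m)) 0"
    unfolding coeff_sum by (simp add: coeff_mult_0 f_def del: of_nat_Suc)
  have "(\<Sum>i=0..Suc m. f i) = f 0 + ((\<Sum>i=1..m. f i) + f (Suc m))"
    by (simp add: sum.atLeast_Suc_atMost sum.cl_ivl_Suc del: of_nat_Suc)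
  also have "f 0 = 0" by (simp add: f_def)
  also have "f (Suc m) = of_nat (Suc m) * coeff (fs_log Vsol (Suc m)) 0"
    by (simp add: f_def Vsol0 del: of_nat_Suc)
  finally show ?thesis using S by (simp add: f_def del: of_nat_Suc)
qed

lemma claim4:
  assumes "n \<ge> 1"
  shows "bcoef n (int n) = of_nat n * acoef (n - 1) (int n - 1)
              + (\<Sum>k = 1..n - 1. of_nat ((n - 1) choose k) * of_nat k * bcoef k (int k)
                   * acoef (n - k - 1) (int (n - k - 1)))"
proof -
  obtain m where n: "n = Suc m" using assms by (cases n) auto
  define v where "v i = coeff (Vsol i) 0" for i
  define l where "l i = coeff (fs_log Vsol i) 0" for i
  have b: "bcoef i (int i) = - fact i * l i" if "i \<ge> 1" for i
    using bcoef_j[of i 0] that by (simp add: l_def Qq_def)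
  have a: "acoef i (int i) = - fact i * v (Suc i)" for i
    using acoef_j[of 0 i] by (simp add: v_def Pp_def)
  have a2: "acoef (n - 1) (int n - 1) = - fact m * v n"
    using a[of m] by (simp add: n)
  have fk: "of_nat (m choose k) * fact k * fact (m - k) = (fact m :: complex)" if "k \<le> m" for k
  proof -
    have "fact k * fact (m - k) * (m choose k) = (fact m :: nat)" using binomial_fact_lemma[OF that] .
    then have "of_nat (fact k * fact (m - k) * (m choose k)) = (of_nat (fact m) :: complex)" by simp
    then show ?thesis by (simp add: algebra_simps)
  qed
  have "(\<Sum>k = 1..m. of_nat (m choose k) * of_nat k * bcoef k (int k) * acoef (m - k) (int (m - k)))
      = (\<Sum>k = 1..m. fact m * (of_nat k * l k * v (Suc m - k)))"
  proof (rule sum.cong[OF refl])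
    fix k assume k: "k \<in> {1..m}"
    have "of_nat (m choose k) * of_nat k * bcoef k (int k) * acoef (m - k) (int (m - k))
        = of_nat (m choose k) * of_nat k * (- fact k * l k) * (- fact (m-k) * v (Suc m - k))"
    proof -
      have "Suc (m - k) = Suc m - k" using k by (auto simp: Suc_diff_le)
      then show ?thesis using k b[of k] a[of "m-k"] by simp
    qed
    also have "of_nat (m choose k) * of_nat k * (- fact k * l k) * (- fact (m-k) * v (Suc m - k))
        = (of_nat (m choose k) * fact k * fact (m - k)) * (of_nat k * l k * v (Suc m - k))"
      by (simp add: algebra_simps)
    also have "\<dots> = fact m * (of_nat k * l k * v (Suc m - k))" using k fk[of k] by simp
    finally show "of_nat (m choose k) * of_nat k * bcoef k (int k) * acoef (m - k) (int (m - k))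
        = fact m * (of_nat k * l k * v (Suc m - k))" .
  qed
  also have "\<dots> = fact m * (\<Sum>k = 1..m. of_nat k * l k * v (Suc m - k))"
    by (simp add: sum_distrib_left)
  also have "(\<Sum>k = 1..m. of_nat k * l k * v (Suc m - k)) = of_nat (Suc m) * v (Suc m) - of_nat (Suc m) * l (Suc m)"
    using log_coeff0[of m] unfolding v_def l_def by (simp add: algebra_simps del: of_nat_Suc)
  finally have S: "(\<Sum>k = 1..m. of_nat (m choose k) * of_nat k * bcoef k (int k) * acoef (m - k) (int (m - k)))
      = fact m * (of_nat (Suc m) * v (Suc m) - of_nat (Suc m) * l (Suc m))" .
  have "(\<Sum>k = 1..n - 1. of_nat ((n - 1) choose k) * of_nat k * bcoef k (int k)
                   * acoef (n - k - 1) (int (n - k - 1)))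
      = (\<Sum>k = 1..m. of_nat (m choose k) * of_nat k * bcoef k (int k) * acoef (m - k) (int (m - k)))"
    by (simp add: n)
  then have E: "(\<Sum>k = 1..n - 1. of_nat ((n - 1) choose k) * of_nat k * bcoef k (int k)
                   * acoef (n - k - 1) (int (n - k - 1)))
      = fact m * (of_nat (Suc m) * v (Suc m) - of_nat (Suc m) * l (Suc m))" using S by simp
  have F: "(fact n :: complex) = of_nat (Suc m) * fact m" by (simp add: n del: of_nat_Suc)
  show ?thesis unfolding E a2 b[OF assms] F
    by (simp add: n algebra_simps del: of_nat_Suc)
qed

theorem theorem4p8:
  shows "(\<forall>n k. n \<ge> 1 \<and> 0 \<le> k \<and> k < int n \<longrightarrow>
            acoef n k = of_nat n * acoef (n - 1) (k - 1)
              + (of_nat n * of_nat (n - 1) / of_int (int n - k)) * acoef (n - 1) k)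
       \<and> (\<forall>n k. n \<ge> 2 \<and> 0 \<le> k \<and> k < int n \<longrightarrow>
            bcoef n k = of_nat n * bcoef (n - 1) (k - 1)
              + (of_nat n * of_nat (n - 1) / of_int (int n - k)) * bcoef (n - 1) k)
       \<and> (\<forall>n k. n \<ge> 1 \<and> 0 \<le> k \<and> k \<le> int n \<longrightarrow>
            acoef n k = bcoef n k + of_int (int n - k + 1) * acoef n (k - 1))
       \<and> (\<forall>n. n \<ge> 1 \<longrightarrow>
            bcoef n (int n) = of_nat n * acoef (n - 1) (int n - 1)
              + (\<Sum>k = 1..n - 1. of_nat ((n - 1) choose k) * of_nat k * bcoef k (int k)
                   * acoef (n - k - 1) (int (n - k - 1))))"
  using claim1 claim2 claim3 claim4 by blast


end
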